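(* Let $X$ be a strictly convex Banach space such that every finite subset of $\ell_2$ admits an isometric embedding into $X$, but $\ell_2$ does not admit an isomorphic (linear) embedding into $X$. Then $D(X)>1$; that is, there exist a locally finite metric space $A$ and a constant $C\ge 1$ such that every finite subset of $A$ admits a bilipschitz embedding into $X$ with distortion $\le C$, but $A$ admits no bilipschitz embedding into $X$ with distortion $\le C$. *)

theory Defs
  imports "HOL-Analysis.Analysis"
begin

definition strictly_convex :: "'a::real_normed_vector itself \<Rightarrow> bool" where
  "strictly_convex _ \<longleftrightarrow>
     (\<forall>x y::'a. norm x = 1 \<and> norm y = 1 \<and> x \<noteq> y \<longrightarrow> norm ((1/2) *\<^sub>R (x + y)) < 1)"

definition l2 :: "(nat \<Rightarrow> real) set" where
  "l2 = {x. summable (\<lambda>n. (x n)\<^sup>2)}"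

definition l2norm :: "(nat \<Rightarrow> real) \<Rightarrow> real" where
  "l2norm x = sqrt (\<Sum>n. (x n)\<^sup>2)"

definition l2dist :: "(nat \<Rightarrow> real) \<Rightarrow> (nat \<Rightarrow> real) \<Rightarrow> real" where
  "l2dist x y = l2norm (\<lambda>n. x n - y n)"

definition finitely_l2_isometric :: "'a::real_normed_vector itself \<Rightarrow> bool" where
  "finitely_l2_isometric _ \<longleftrightarrow>
     (\<forall>S. S \<subseteq> l2 \<and> finite S \<longrightarrow>
        (\<exists>f :: (nat \<Rightarrow> real) \<Rightarrow> 'a. \<forall>x\<in>S. \<forall>y\<in>S. norm (f x - f y) = l2dist x y))"

definition l2_isomorphic_embeds :: "'a::real_normed_vector itself \<Rightarrow> bool" where
  "l2_isomorphic_embeds _ \<longleftrightarrow>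
     (\<exists>(T :: (nat \<Rightarrow> real) \<Rightarrow> 'a) c C.
        0 < c \<and>
        (\<forall>x\<in>l2. \<forall>y\<in>l2. T (\<lambda>n. x n + y n) = T x + T y) \<and>
        (\<forall>a. \<forall>x\<in>l2. T (\<lambda>n. a * x n) = a *\<^sub>R T x) \<and>
        (\<forall>x\<in>l2. c * l2norm x \<le> norm (T x) \<and> norm (T x) \<le> C * l2norm x))"

definition bilip_embeds :: "'b set \<Rightarrow> ('b \<Rightarrow> 'b \<Rightarrow> real) \<Rightarrow> real \<Rightarrow> 'a::real_normed_vector itself \<Rightarrow> bool" where
  "bilip_embeds A d C _ \<longleftrightarrow>
     (\<exists>(f :: 'b \<Rightarrow> 'a) r. 0 < r \<and>
        (\<forall>a\<in>A. \<forall>b\<in>A. r * d a b \<le> norm (f a - f b) \<and> norm (f a - f b) \<le> C * r * d a b))"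

definition locally_finite_metric :: "'b set \<Rightarrow> ('b \<Rightarrow> 'b \<Rightarrow> real) \<Rightarrow> bool" where
  "locally_finite_metric A d \<longleftrightarrow>
     Metric_space A d \<and> (\<forall>a\<in>A. \<forall>R::real. finite {b\<in>A. d a b \<le> R})"

end

theory Submission
  imports Defs
begin


lemma l2dist_fin:
  assumes "\<And>i. i \<ge> K \<Longrightarrow> x i = 0" "\<And>i. i \<ge> K \<Longrightarrow> y i = 0"
  shows "l2dist x y = sqrt (\<Sum>i<K. (x i - y i)\<^sup>2)"
  unfolding l2dist_def l2norm_def
  by (subst suminf_finite[of "{..<K}"]) (auto simp: assms)

lemma l2dist_mid:
  assumes "\<And>i. i \<ge> K \<Longrightarrow> p i = 0" "\<And>i. i \<ge> K \<Longrightarrow> q i = 0"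
    and c: "\<And>i. c i = (p i + q i)/2"
  shows "l2dist p c = l2dist p q / 2 \<and> l2dist c q = l2dist p q / 2"
proof -
  have cK: "\<And>i. i \<ge> K \<Longrightarrow> c i = 0" using assms(1,2) by (simp add: c)
  have e1: "(\<Sum>i<K. (p i - c i)\<^sup>2) = (\<Sum>i<K. (p i - q i)\<^sup>2) / 4"
    by (simp add: c sum_divide_distrib power2_eq_square field_simps)
  have e2: "(\<Sum>i<K. (c i - q i)\<^sup>2) = (\<Sum>i<K. (p i - q i)\<^sup>2) / 4"
    by (simp add: c sum_divide_distrib power2_eq_square field_simps)
  have s4: "\<And>S. sqrt (S/4) = sqrt S / 2" by (simp add: real_sqrt_divide)
  have d1: "l2dist p c = sqrt (\<Sum>i<K. (p i - c i)\<^sup>2)" by (rule l2dist_fin) (use assms cK in auto)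
  have d2: "l2dist c q = sqrt (\<Sum>i<K. (c i - q i)\<^sup>2)" by (rule l2dist_fin) (use assms cK in auto)
  have d3: "l2dist p q = sqrt (\<Sum>i<K. (p i - q i)\<^sup>2)" by (rule l2dist_fin) (use assms cK in auto)
  show ?thesis unfolding d1 d2 d3 by (simp only: e1 e2 s4)
qed

lemma sc_mid:
  fixes x y z :: "'a::real_normed_vector"
  assumes sc: "strictly_convex TYPE('a)"
    and h1: "norm (x - z) = t" and h2: "norm (z - y) = t" and h3: "norm (x - y) = 2*t"
  shows "z = (1/2) *\<^sub>R (x + y)"
proof (cases "t = 0")
  case True
  then have "x = z" "z = y" using h1 h2 by auto
  then show ?thesis by (simp add: scaleR_2[symmetric])
next
  case False
  then have tp: "t > 0" using h1 by (metis norm_ge_zero order_le_less)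
  define u where "u = (1/t) *\<^sub>R (z - x)"
  define v where "v = (1/t) *\<^sub>R (y - z)"
  have nu: "norm u = 1" using h1 tp by (simp add: u_def norm_minus_commute)
  have nv: "norm v = 1" using h2 tp by (simp add: v_def norm_minus_commute)
  have uv: "u + v = (1/t) *\<^sub>R (y - x)" by (simp add: u_def v_def algebra_simps)
  have "norm ((1/2) *\<^sub>R (u + v)) = 1" using h3 tp by (simp add: uv norm_minus_commute)
  hence "u = v" using sc nu nv unfolding strictly_convex_def by force
  hence "z - x = y - z" using tp by (simp add: u_def v_def)
  hence "x + y = 2 *\<^sub>R z" by (simp add: scaleR_2 algebra_simps)
  then show ?thesis by simp
qed

definition pt :: "nat \<Rightarrow> (nat \<Rightarrow> nat) \<Rightarrow> nat \<Rightarrow> real" where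
  "pt M a i = (case i of 0 \<Rightarrow> real M | Suc j \<Rightarrow> real (a j))"

definition Pm :: "nat \<Rightarrow> (nat \<Rightarrow> nat) \<Rightarrow> bool" where
  "Pm M a \<longleftrightarrow> (\<forall>j. a j \<le> M) \<and> (\<forall>j. M \<le> j \<longrightarrow> a j = 0)"

definition PP :: "(nat \<Rightarrow> real) set" where
  "PP = {pt M a | M a. Pm M a}"

lemma pt_supp: "Pm M a \<Longrightarrow> M \<le> K \<Longrightarrow> Suc K \<le> i \<Longrightarrow> pt M a i = 0"
  by (cases i) (auto simp: pt_def Pm_def)

lemma Pm_dbl: "Pm M a \<Longrightarrow> Pm (2*M) (\<lambda>j. 2 * a j)"
  by (auto simp: Pm_def)
lemma Pm_add: "Pm M a \<Longrightarrow> Pm M' b \<Longrightarrow> Pm (M+M') (\<lambda>j. a j + b j)"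
  by (auto simp: Pm_def add_mono)
lemma Pm_zero: "Pm M (\<lambda>_. 0)" by (simp add: Pm_def)
lemma Pm_delta: "Pm (Suc n) (\<lambda>i. if i = n then 1 else 0)" by (simp add: Pm_def)

lemma PP_iso_mid:
  fixes g :: "(nat \<Rightarrow> real) \<Rightarrow> 'a::real_normed_vector"
  assumes sc: "strictly_convex TYPE('a)"
    and iso: "\<forall>x\<in>PP. \<forall>y\<in>PP. norm (g x - g y) = l2dist x y"
    and P: "Pm M a" "Pm M' b" "Pm M'' c"
    and mid: "\<And>i. pt M'' c i = (pt M a i + pt M' b i)/2"
  shows "g (pt M'' c) = (1/2) *\<^sub>R (g (pt M a) + g (pt M' b))"
proof -
  let ?K = "Suc (M + M' + M'')"
  have s1: "\<And>i. i \<ge> ?K \<Longrightarrow> pt M a i = 0" using pt_supp[OF P(1), of "M+M'+M''"] by simp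
  have s2: "\<And>i. i \<ge> ?K \<Longrightarrow> pt M' b i = 0" using pt_supp[OF P(2), of "M+M'+M''"] by simp
  have m: "l2dist (pt M a) (pt M'' c) = l2dist (pt M a) (pt M' b) / 2 \<and>
           l2dist (pt M'' c) (pt M' b) = l2dist (pt M a) (pt M' b) / 2"
    by (rule l2dist_mid[OF s1 s2 mid])
  have inP: "pt M a \<in> PP" "pt M' b \<in> PP" "pt M'' c \<in> PP" using P by (auto simp: PP_def)
  show ?thesis
    apply (rule sc_mid[OF sc, where t = "l2dist (pt M a) (pt M' b) / 2"])
    using iso inP m by auto
qed



locale isoP =
  fixes g :: "(nat \<Rightarrow> real) \<Rightarrow> 'a::banach"
  assumes sc: "strictly_convex TYPE('a)"
    and iso: "\<forall>x\<in>PP. \<forall>y\<in>PP. norm (g x - g y) = l2dist x y"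
begin

definition Gp :: "nat \<Rightarrow> (nat \<Rightarrow> nat) \<Rightarrow> 'a" where
  "Gp M a = g (pt M a) - g (pt 0 (\<lambda>_. 0))"

lemma Gp_dbl: assumes "Pm M a" shows "Gp (2*M) (\<lambda>j. 2 * a j) = 2 *\<^sub>R Gp M a"
proof -
  have "g (pt M a) = (1/2) *\<^sub>R (g (pt 0 (\<lambda>_. 0)) + g (pt (2*M) (\<lambda>j. 2 * a j)))"
    by (rule PP_iso_mid[OF sc iso Pm_zero Pm_dbl[OF assms] assms]) (auto simp: pt_def split: nat.split)
  hence "2 *\<^sub>R g (pt M a) = g (pt 0 (\<lambda>_. 0)) + g (pt (2*M) (\<lambda>j. 2 * a j))" by simp
  thus ?thesis unfolding Gp_def by (simp add: algebra_simps scaleR_2)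
qed

lemma Gp_add: assumes "Pm M a" "Pm M' b"
  shows "Gp (M+M') (\<lambda>j. a j + b j) = Gp M a + Gp M' b"
proof -
  have "g (pt (M+M') (\<lambda>j. a j + b j)) = (1/2) *\<^sub>R (g (pt (2*M) (\<lambda>j. 2 * a j)) + g (pt (2*M') (\<lambda>j. 2 * b j)))"
    by (rule PP_iso_mid[OF sc iso Pm_dbl[OF assms(1)] Pm_dbl[OF assms(2)] Pm_add[OF assms]])
      (auto simp: pt_def split: nat.split)
  hence "2 *\<^sub>R g (pt (M+M') (\<lambda>j. a j + b j)) = g (pt (2*M) (\<lambda>j. 2 * a j)) + g (pt (2*M') (\<lambda>j. 2 * b j))" by simp
  hence "2 *\<^sub>R Gp (M+M') (\<lambda>j. a j + b j) = Gp (2*M) (\<lambda>j. 2 * a j) + Gp (2*M') (\<lambda>j. 2 * b j)"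
    unfolding Gp_def by (simp add: algebra_simps scaleR_2)
  also have "\<dots> = 2 *\<^sub>R (Gp M a + Gp M' b)" using Gp_dbl assms by (simp add: scaleR_add_right)
  finally show ?thesis by simp
qed

definition D :: "nat \<Rightarrow> (nat \<Rightarrow> nat) \<Rightarrow> 'a" where
  "D M a = Gp M a - Gp M (\<lambda>_. 0)"

lemma D_add: assumes "Pm M a" "Pm M' b"
  shows "D (M+M') (\<lambda>j. a j + b j) = D M a + D M' b"
  using Gp_add[OF assms] Gp_add[OF Pm_zero Pm_zero, of M M'] unfolding D_def by simp

lemma D_shift: assumes "Pm M a" shows "D (M+L) a = D M a"
  using D_add[OF assms Pm_zero, of L] unfolding D_def by simp

definition u :: "nat \<Rightarrow> 'a" where
  "u n = D (Suc n) (\<lambda>i. if i = n then 1 else 0)"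

lemma D_zero: "D M (\<lambda>_. 0) = 0" by (simp add: D_def)

lemma D_multi: "Pm M (\<lambda>i. if i = n then k else 0) \<Longrightarrow> D M (\<lambda>i. if i = n then k else 0) = real k *\<^sub>R u n"
proof (induction k arbitrary: M)
  case 0
  then show ?case by (simp add: D_zero)
next
  case (Suc k)
  have P1: "Pm M (\<lambda>i. if i = n then k else 0)" using Suc.prems by (auto simp: Pm_def split: if_splits)
  have e: "(\<lambda>i. (if i = n then k else 0) + (if i = n then 1 else 0)) = (\<lambda>i. if i = n then Suc k else (0::nat))"
    by auto
  have "D (M + Suc n) (\<lambda>i. if i = n then Suc k else 0) = D M (\<lambda>i. if i = n then k else 0) + u n"
    using D_add[OF P1 Pm_delta[of n]] unfolding e u_def by simp
  moreover have "D (M + Suc n) (\<lambda>i. if i = n then Suc k else 0) = D M (\<lambda>i. if i = n then Suc k else 0)"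
    by (rule D_shift[OF Suc.prems])
  ultimately show ?case using Suc.IH[OF P1] by (simp add: algebra_simps)
qed

lemma D_lin: "Pm M a \<Longrightarrow> (\<forall>j\<ge>n. a j = 0) \<Longrightarrow> D M a = (\<Sum>j<n. real (a j) *\<^sub>R u j)"
proof (induction n arbitrary: M a)
  case 0
  then have "a = (\<lambda>_. 0)" by auto
  then show ?case by (simp add: D_zero)
next
  case (Suc n)
  define a' where "a' = (\<lambda>j. if j = n then 0 else a j)"
  define b where "b = (\<lambda>j. if j = n then a n else 0)"
  have P1: "Pm M a'" "Pm M b" using Suc.prems(1) by (auto simp: Pm_def a'_def b_def)
  have ab: "(\<lambda>j. a' j + b j) = a" by (auto simp: a'_def b_def)
  have "D (M+M) a = D M a' + D M b" using D_add[OF P1] unfolding ab .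
  moreover have "D (M+M) a = D M a" by (rule D_shift[OF Suc.prems(1)])
  moreover have "D M a' = (\<Sum>j<n. real (a' j) *\<^sub>R u j)"
    by (rule Suc.IH[OF P1(1)]) (use Suc.prems(2) in \<open>auto simp: a'_def\<close>)
  moreover have "(\<Sum>j<n. real (a' j) *\<^sub>R u j) = (\<Sum>j<n. real (a j) *\<^sub>R u j)"
    by (rule sum.cong) (auto simp: a'_def)
  moreover have "D M b = real (a n) *\<^sub>R u n" unfolding b_def by (rule D_multi) (use P1(2) b_def in simp)
  ultimately show ?case by simp
qed

end



context isoP
begin

lemma norm_nat:
  fixes a b :: "nat \<Rightarrow> nat"
  assumes "\<forall>j\<ge>n. a j = 0" "\<forall>j\<ge>n. b j = 0"
  shows "norm (\<Sum>j<n. (real (a j) - real (b j)) *\<^sub>R u j) = sqrt (\<Sum>j<n. (real (a j) - real (b j))\<^sup>2)"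
proof -
  define M where "M = n + (\<Sum>j<n. a j + b j)"
  have Pa: "Pm M a"
  proof -
    have "a j \<le> M" for j
    proof (cases "j < n")
      case True
      have "a j \<le> a j + b j" by simp
      also have "\<dots> \<le> (\<Sum>j<n. a j + b j)" by (rule member_le_sum) (use True in auto)
      finally show ?thesis unfolding M_def by simp
    qed (use assms in auto)
    thus ?thesis using assms unfolding Pm_def M_def by auto
  qed
  have Pb: "Pm M b"
  proof -
    have "b j \<le> M" for j
    proof (cases "j < n")
      case True
      have "b j \<le> a j + b j" by simp
      also have "\<dots> \<le> (\<Sum>j<n. a j + b j)" by (rule member_le_sum) (use True in auto)
      finally show ?thesis unfolding M_def by simp
    qed (use assms in auto)
    thus ?thesis using assms unfolding Pm_def M_def by auto
  qed
  have "g (pt M a) - g (pt M b) = D M a - D M b" unfolding D_def Gp_def by simp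
  also have "\<dots> = (\<Sum>j<n. (real (a j) - real (b j)) *\<^sub>R u j)"
    using D_lin[OF Pa assms(1)] D_lin[OF Pb assms(2)]
    by (simp add: scaleR_diff_left sum_subtractf)
  finally have e1: "g (pt M a) - g (pt M b) = (\<Sum>j<n. (real (a j) - real (b j)) *\<^sub>R u j)" .
  have inP: "pt M a \<in> PP" "pt M b \<in> PP" using Pa Pb by (auto simp: PP_def)
  have sa: "\<And>i. i \<ge> Suc n \<Longrightarrow> pt M a i = 0" using assms(1) by (auto simp: pt_def split: nat.split)
  have sb: "\<And>i. i \<ge> Suc n \<Longrightarrow> pt M b i = 0" using assms(2) by (auto simp: pt_def split: nat.split)
  have "norm (g (pt M a) - g (pt M b)) = l2dist (pt M a) (pt M b)" using iso inP by auto
  also have "\<dots> = sqrt (\<Sum>i<Suc n. (pt M a i - pt M b i)\<^sup>2)" by (rule l2dist_fin[OF sa sb])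
  also have "\<dots> = sqrt (\<Sum>j<n. (real (a j) - real (b j))\<^sup>2)"
    by (simp only: sum.lessThan_Suc_shift) (simp add: pt_def)
  finally show ?thesis unfolding e1 .
qed

lemma norm_int:
  fixes k :: "nat \<Rightarrow> int"
  shows "norm (\<Sum>j<n. of_int (k j) *\<^sub>R u j) = sqrt (\<Sum>j<n. (of_int (k j) :: real)\<^sup>2)"
proof -
  define a where "a j = (if j < n then nat (k j) else 0)" for j
  define b where "b j = (if j < n then nat (- k j) else 0)" for j
  have ab: "\<And>j. j < n \<Longrightarrow> real (a j) - real (b j) = of_int (k j)" by (auto simp: a_def b_def)
  have "norm (\<Sum>j<n. (real (a j) - real (b j)) *\<^sub>R u j) = sqrt (\<Sum>j<n. (real (a j) - real (b j))\<^sup>2)"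
    by (rule norm_nat) (auto simp: a_def b_def)
  moreover have "(\<Sum>j<n. (real (a j) - real (b j)) *\<^sub>R u j) = (\<Sum>j<n. of_int (k j) *\<^sub>R u j)"
    by (rule sum.cong) (auto simp: ab)
  moreover have "(\<Sum>j<n. (real (a j) - real (b j))\<^sup>2) = (\<Sum>j<n. (of_int (k j) :: real)\<^sup>2)"
    by (rule sum.cong) (auto simp: ab)
  ultimately show ?thesis by simp
qed

lemma floor_lim: "(\<lambda>m. of_int \<lfloor>real (Suc m) * c\<rfloor> / real (Suc m)) \<longlonglongrightarrow> (c::real)"
proof (rule tendsto_sandwich[of "\<lambda>m. c - 1 / real (Suc m)" _ _ "\<lambda>m. c"])
  show "\<forall>\<^sub>F m in sequentially. c - 1 / real (Suc m) \<le> of_int \<lfloor>real (Suc m) * c\<rfloor> / real (Suc m)"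
  proof (rule always_eventually, rule allI)
    fix m
    have h: "real (Suc m) * c - 1 \<le> of_int \<lfloor>real (Suc m) * c\<rfloor>" by linarith
    have "c - 1 / real (Suc m) = (real (Suc m) * c - 1) / real (Suc m)" by (simp add: field_simps)
    also have "\<dots> \<le> of_int \<lfloor>real (Suc m) * c\<rfloor> / real (Suc m)"
      by (rule divide_right_mono[OF h]) simp
    finally show "c - 1 / real (Suc m) \<le> of_int \<lfloor>real (Suc m) * c\<rfloor> / real (Suc m)" .
  qed
  show "\<forall>\<^sub>F m in sequentially. of_int \<lfloor>real (Suc m) * c\<rfloor> / real (Suc m) \<le> c"
  proof (rule always_eventually, rule allI)
    fix m
    have "of_int \<lfloor>real (Suc m) * c\<rfloor> \<le> real (Suc m) * c" by linarith
    thus "of_int \<lfloor>real (Suc m) * c\<rfloor> / real (Suc m) \<le> c"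
      by (simp add: field_simps)
  qed
  show "(\<lambda>m. c - 1 / real (Suc m)) \<longlonglongrightarrow> c"
    using tendsto_diff[OF tendsto_const LIMSEQ_Suc[OF lim_1_over_n], of c] by simp
qed simp

lemma norm_real:
  fixes c :: "nat \<Rightarrow> real"
  shows "norm (\<Sum>j<n. c j *\<^sub>R u j) = sqrt (\<Sum>j<n. (c j)\<^sup>2)"
proof -
  define q where "q m j = of_int \<lfloor>real (Suc m) * c j\<rfloor> / real (Suc m)" for m j
  have eq: "norm (\<Sum>j<n. q m j *\<^sub>R u j) = sqrt (\<Sum>j<n. (q m j)\<^sup>2)" for m
  proof -
    let ?k = "\<lambda>j. \<lfloor>real (Suc m) * c j\<rfloor>"
    have "(\<Sum>j<n. q m j *\<^sub>R u j) = (1 / real (Suc m)) *\<^sub>R (\<Sum>j<n. of_int (?k j) *\<^sub>R u j)"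
      by (simp add: q_def scaleR_sum_right)
    hence "norm (\<Sum>j<n. q m j *\<^sub>R u j) = sqrt (\<Sum>j<n. (of_int (?k j) :: real)\<^sup>2) / real (Suc m)"
      using norm_int[of ?k] by simp
    also have "\<dots> = sqrt ((\<Sum>j<n. (of_int (?k j) :: real)\<^sup>2) / (real (Suc m))\<^sup>2)"
      by (simp add: real_sqrt_divide)
    also have "\<dots> = sqrt (\<Sum>j<n. (q m j)\<^sup>2)"
      by (simp add: q_def sum_divide_distrib power_divide)
    finally show ?thesis .
  qed
  have l: "\<And>j. (\<lambda>m. q m j) \<longlonglongrightarrow> c j" unfolding q_def by (rule floor_lim)
  have L1: "(\<lambda>m. norm (\<Sum>j<n. q m j *\<^sub>R u j)) \<longlonglongrightarrow> norm (\<Sum>j<n. c j *\<^sub>R u j)"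
    by (intro tendsto_intros l)
  have L2: "(\<lambda>m. sqrt (\<Sum>j<n. (q m j)\<^sup>2)) \<longlonglongrightarrow> sqrt (\<Sum>j<n. (c j)\<^sup>2)"
    by (intro tendsto_intros l)
  show ?thesis using LIMSEQ_unique[OF L1] L2 unfolding eq by simp
qed

lemma norm_set:
  fixes c :: "nat \<Rightarrow> real"
  assumes "finite S"
  shows "norm (\<Sum>j\<in>S. c j *\<^sub>R u j) = sqrt (\<Sum>j\<in>S. (c j)\<^sup>2)"
proof -
  obtain n where n: "S \<subseteq> {..<n}" using assms finite_nat_bounded by blast
  define c' where "c' j = (if j \<in> S then c j else 0)" for j
  have "norm (\<Sum>j<n. c' j *\<^sub>R u j) = sqrt (\<Sum>j<n. (c' j)\<^sup>2)" by (rule norm_real)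
  moreover have "(\<Sum>j<n. c' j *\<^sub>R u j) = (\<Sum>j\<in>S. c j *\<^sub>R u j)"
  proof -
    have "(\<Sum>j<n. c' j *\<^sub>R u j) = (\<Sum>j<n. if j \<in> S then c j *\<^sub>R u j else 0)"
      by (rule sum.cong) (auto simp: c'_def)
    also have "\<dots> = (\<Sum>j\<in>{..<n} \<inter> S. c j *\<^sub>R u j)" by (simp add: sum.inter_restrict)
    also have "{..<n} \<inter> S = S" using n by auto
    finally show ?thesis .
  qed
  moreover have "(\<Sum>j<n. (c' j)\<^sup>2) = (\<Sum>j\<in>S. (c j)\<^sup>2)"
  proof -
    have "(\<Sum>j<n. (c' j)\<^sup>2) = (\<Sum>j<n. if j \<in> S then (c j)\<^sup>2 else 0)"
      by (rule sum.cong) (auto simp: c'_def)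
    also have "\<dots> = (\<Sum>j\<in>{..<n} \<inter> S. (c j)\<^sup>2)" by (simp add: sum.inter_restrict)
    also have "{..<n} \<inter> S = S" using n by auto
    finally show ?thesis .
  qed
  ultimately show ?thesis by simp
qed

end



context isoP
begin

lemma summ: assumes "x \<in> l2" shows "summable (\<lambda>j. x j *\<^sub>R u j)"
proof -
  have sx: "summable (\<lambda>n. (x n)\<^sup>2)" using assms by (simp add: l2_def)
  show ?thesis unfolding summable_Cauchy
  proof (intro allI impI)
    fix e :: real assume e: "e > 0"
    then have "e\<^sup>2 > 0" by simp
    then obtain N where N: "\<forall>m\<ge>N. \<forall>n. norm (sum (\<lambda>n. (x n)\<^sup>2) {m..<n}) < e\<^sup>2"
      using sx[unfolded summable_Cauchy] by blast
    show "\<exists>N. \<forall>m\<ge>N. \<forall>n. norm (sum (\<lambda>j. x j *\<^sub>R u j) {m..<n}) < e"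
    proof (intro exI allI impI)
      fix m n assume mN: "m \<ge> N"
      have "norm (sum (\<lambda>j. x j *\<^sub>R u j) {m..<n}) = sqrt (\<Sum>j\<in>{m..<n}. (x j)\<^sup>2)"
        by (rule norm_set) simp
      also have "\<dots> < sqrt (e\<^sup>2)"
      proof (rule real_sqrt_less_mono)
        have "(\<Sum>j\<in>{m..<n}. (x j)\<^sup>2) \<ge> 0" by (simp add: sum_nonneg)
        moreover have "\<bar>\<Sum>j\<in>{m..<n}. (x j)\<^sup>2\<bar> < e\<^sup>2" using N mN by (metis real_norm_def)
        ultimately show "(\<Sum>j\<in>{m..<n}. (x j)\<^sup>2) < e\<^sup>2" by simp
      qed
      also have "\<dots> = e" using e by simp
      finally show "norm (sum (\<lambda>j. x j *\<^sub>R u j) {m..<n}) < e" .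
    qed
  qed
qed

lemma l2emb: "l2_isomorphic_embeds TYPE('a)"
proof -
  define T where "T x = (\<Sum>j. x j *\<^sub>R u j)" for x :: "nat \<Rightarrow> real"
  have add: "\<forall>x\<in>l2. \<forall>y\<in>l2. T (\<lambda>n. x n + y n) = T x + T y"
    unfolding T_def by (auto simp: scaleR_add_left suminf_add[OF summ summ])
  have hom: "\<forall>a. \<forall>x\<in>l2. T (\<lambda>n. a * x n) = a *\<^sub>R T x"
    unfolding T_def by (auto simp: suminf_scaleR_right[OF summ])
  have nrm: "norm (T x) = l2norm x" if x: "x \<in> l2" for x
  proof -
    have sx: "summable (\<lambda>n. (x n)\<^sup>2)" using x by (simp add: l2_def)
    have L1: "(\<lambda>N. norm (\<Sum>j<N. x j *\<^sub>R u j)) \<longlonglongrightarrow> norm (T x)"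
      unfolding T_def by (intro tendsto_intros summable_LIMSEQ summ x)
    have L2: "(\<lambda>N. sqrt (\<Sum>j<N. (x j)\<^sup>2)) \<longlonglongrightarrow> l2norm x"
      unfolding l2norm_def by (intro tendsto_intros summable_LIMSEQ sx)
    show ?thesis using LIMSEQ_unique[OF L1] L2 by (simp add: norm_real)
  qed
  show ?thesis unfolding l2_isomorphic_embeds_def
    by (intro exI[of _ T] exI[of _ 1]) (auto simp: add hom nrm)
qed

end



lemma PP_supp: assumes "x \<in> PP" shows "\<exists>K. \<forall>i\<ge>K. x i = 0"
proof -
  obtain M a where "x = pt M a" "Pm M a" using assms unfolding PP_def by blast
  thus ?thesis using pt_supp[of M a M] by (intro exI[of _ "Suc M"]) simp
qed

lemma PP_l2: "PP \<subseteq> l2"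
proof
  fix x assume "x \<in> PP"
  then obtain K where K: "\<forall>i\<ge>K. x i = 0" using PP_supp by blast
  have "summable (\<lambda>n. (x n)\<^sup>2)"
  proof (rule summable_finite[of "{..<K}"])
    fix n assume "n \<notin> {..<K}"
    then show "(x n)\<^sup>2 = 0" using K by simp
  qed simp
  then show "x \<in> l2" unfolding l2_def by simp
qed

lemma l2dist_comm: "l2dist x y = l2dist y x"
  unfolding l2dist_def l2norm_def by (simp add: power2_commute)

lemma PP_two:
  assumes "x \<in> PP" "y \<in> PP"
  obtains K where "K > 0" "\<forall>i\<ge>K. x i = 0" "\<forall>i\<ge>K. y i = 0"
    "l2dist x y = sqrt (\<Sum>i<K. (x i - y i)\<^sup>2)"
proof -
  obtain K1 where K1: "\<forall>i\<ge>K1. x i = 0" using PP_supp assms(1) by blast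
  obtain K2 where K2: "\<forall>i\<ge>K2. y i = 0" using PP_supp assms(2) by blast
  note K = K1 K2
  let ?K = "Suc (K1 + K2)"
  have "\<forall>i\<ge>?K. x i = 0" "\<forall>i\<ge>?K. y i = 0" using K by auto
  moreover from this have "l2dist x y = sqrt (\<Sum>i<?K. (x i - y i)\<^sup>2)" by (intro l2dist_fin) auto
  ultimately show ?thesis using that[of ?K] by auto
qed

lemma PP_nonneg: assumes "x \<in> PP" "y \<in> PP" shows "0 \<le> l2dist x y"
proof -
  obtain K where K: "K > 0" "\<forall>i\<ge>K. x i = 0" "\<forall>i\<ge>K. y i = 0" "l2dist x y = sqrt (\<Sum>i<K. (x i - y i)\<^sup>2)" by (rule PP_two[OF assms])
  show ?thesis unfolding K(4) by (simp add: sum_nonneg)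
qed

lemma PP_zero: assumes "x \<in> PP" "y \<in> PP" shows "l2dist x y = 0 \<longleftrightarrow> x = y"
proof
  assume h: "l2dist x y = 0"
  obtain K where K: "K > 0" "\<forall>i\<ge>K. x i = 0" "\<forall>i\<ge>K. y i = 0" "l2dist x y = sqrt (\<Sum>i<K. (x i - y i)\<^sup>2)" by (rule PP_two[OF assms])
  have "(\<Sum>i<K. (x i - y i)\<^sup>2) = 0" using h K by simp
  hence "\<forall>i\<in>{..<K}. (x i - y i)\<^sup>2 = 0" by (subst (asm) sum_nonneg_eq_0_iff) auto
  hence "x i = y i" for i using K by (cases "i < K") auto
  thus "x = y" by auto
qed (simp add: l2dist_def l2norm_def)

lemma PP_coord0: assumes "x \<in> PP" "y \<in> PP" shows "\<bar>x 0 - y 0\<bar> \<le> l2dist x y"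
proof -
  obtain K where K: "K > 0" "\<forall>i\<ge>K. x i = 0" "\<forall>i\<ge>K. y i = 0" "l2dist x y = sqrt (\<Sum>i<K. (x i - y i)\<^sup>2)" by (rule PP_two[OF assms])
  have "(x 0 - y 0)\<^sup>2 \<le> (\<Sum>i<K. (x i - y i)\<^sup>2)" by (rule member_le_sum) (use K in auto)
  hence "sqrt ((x 0 - y 0)\<^sup>2) \<le> sqrt (\<Sum>i<K. (x i - y i)\<^sup>2)" by (rule real_sqrt_le_mono)
  thus ?thesis using K by simp
qed

lemma PP_tri: assumes "x \<in> PP" "y \<in> PP" "z \<in> PP" shows "l2dist x z \<le> l2dist x y + l2dist y z"
proof -
  obtain K1 where K1: "\<forall>i\<ge>K1. x i = 0" using PP_supp assms(1) by blast
  obtain K2 where K2: "\<forall>i\<ge>K2. y i = 0" using PP_supp assms(2) by blast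
  obtain K3 where K3: "\<forall>i\<ge>K3. z i = 0" using PP_supp assms(3) by blast
  note K = K1 K2 K3
  let ?K = "K1 + K2 + K3"
  have e: "\<And>p q. (\<forall>i\<ge>?K. p i = 0) \<Longrightarrow> (\<forall>i\<ge>?K. q i = 0) \<Longrightarrow> l2dist p q = L2_set (\<lambda>i. p i - q i) {..<?K}"
    unfolding L2_set_def by (intro l2dist_fin) auto
  have s: "\<forall>i\<ge>?K. x i = 0" "\<forall>i\<ge>?K. y i = 0" "\<forall>i\<ge>?K. z i = 0" using K by auto
  have "L2_set (\<lambda>i. x i - z i) {..<?K} = L2_set (\<lambda>i. (x i - y i) + (y i - z i)) {..<?K}" by simp
  also have "\<dots> \<le> L2_set (\<lambda>i. x i - y i) {..<?K} + L2_set (\<lambda>i. y i - z i) {..<?K}"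
    by (rule L2_set_triangle_ineq)
  finally show ?thesis using e[OF s(1) s(3)] e[OF s(1) s(2)] e[OF s(2) s(3)] by simp
qed

definition Pfin :: "nat \<Rightarrow> (nat \<Rightarrow> real) set" where
  "Pfin K = (\<Union>M\<in>{..K}. pt M ` {b. Pm M b})"

lemma finite_Pm: "finite {b. Pm M b}"
proof (rule finite_subset)
  show "{b. Pm M b} \<subseteq> {f. \<forall>x. (x \<in> {..<M} \<longrightarrow> f x \<in> {..M}) \<and> (x \<notin> {..<M} \<longrightarrow> f x = 0)}"
  proof
    fix b assume "b \<in> {b. Pm M b}"
    then have "\<forall>j. b j \<le> M" "\<forall>j. M \<le> j \<longrightarrow> b j = 0" unfolding Pm_def by auto
    then show "b \<in> {f. \<forall>x. (x \<in> {..<M} \<longrightarrow> f x \<in> {..M}) \<and> (x \<notin> {..<M} \<longrightarrow> f x = 0)}"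
      by (simp add: not_less)
  qed
  show "finite {f. \<forall>x. (x \<in> {..<M} \<longrightarrow> f x \<in> {..M}) \<and> (x \<notin> {..<M} \<longrightarrow> f x = (0::nat))}"
    by (rule finite_set_of_finite_funs) auto
qed

lemma finite_Pfin: "finite (Pfin K)"
  unfolding Pfin_def by (auto intro: finite_Pm)

lemma countable_PP: "countable PP"
proof (rule countable_subset)
  show "PP \<subseteq> (\<Union>K. Pfin K)"
  proof
    fix x assume "x \<in> PP"
    then obtain M a where "x = pt M a" "Pm M a" unfolding PP_def by blast
    then have "x \<in> Pfin M" unfolding Pfin_def by auto
    thus "x \<in> (\<Union>K. Pfin K)" by blast
  qed
  show "countable (\<Union>K. Pfin K)"
    by (rule countable_UN) (auto intro: countable_finite finite_Pfin)
qed

lemma PP_ne: "pt 0 (\<lambda>_. 0) \<in> PP" unfolding PP_def using Pm_zero by blast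



theorem theorem1p7:
  assumes "strictly_convex TYPE('a::banach)"
    and "finitely_l2_isometric TYPE('a)"
    and "\<not> l2_isomorphic_embeds TYPE('a)"
  shows "\<exists>(A :: nat set) (d :: nat \<Rightarrow> nat \<Rightarrow> real) C.
           locally_finite_metric A d \<and> 1 \<le> C \<and>
           (\<forall>F. F \<subseteq> A \<and> finite F \<longrightarrow> bilip_embeds F d C TYPE('a)) \<and>
           \<not> bilip_embeds A d C TYPE('a)"
proof -
  have ne: "PP \<noteq> {}" using PP_ne by blast
  define A where "A = to_nat_on PP ` PP"
  define d where "d i j = l2dist (from_nat_into PP i) (from_nat_into PP j)" for i j
  have FP: "\<And>i. from_nat_into PP i \<in> PP" using from_nat_into[OF ne] .
  have ft: "\<And>x. x \<in> PP \<Longrightarrow> from_nat_into PP (to_nat_on PP x) = x"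
    using countable_PP by simp
  have metric: "Metric_space A d"
  proof
    show "\<And>x y. 0 \<le> d x y" unfolding d_def using PP_nonneg FP by blast
    show "\<And>x y. d x y = d y x" unfolding d_def using l2dist_comm by blast
    show "\<And>x y. x \<in> A \<Longrightarrow> y \<in> A \<Longrightarrow> d x y = 0 \<longleftrightarrow> x = y"
      unfolding d_def A_def using PP_zero FP ft by auto
    show "\<And>x y z. x \<in> A \<Longrightarrow> y \<in> A \<Longrightarrow> z \<in> A \<Longrightarrow> d x z \<le> d x y + d y z"
      unfolding d_def using PP_tri FP by blast
  qed
  have lf: "\<forall>a\<in>A. \<forall>R::real. finite {b\<in>A. d a b \<le> R}"
  proof (intro ballI allI)
    fix a R assume "a \<in> A"
    obtain M a' where X: "from_nat_into PP a = pt M a'" "Pm M a'" using FP[of a] unfolding PP_def by blast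
    define K where "K = nat \<lceil>real M + R\<rceil>"
    have "{b\<in>A. d a b \<le> R} \<subseteq> to_nat_on PP ` Pfin K"
    proof
      fix b assume b: "b \<in> {b\<in>A. d a b \<le> R}"
      then obtain Y where Y: "Y \<in> PP" "b = to_nat_on PP Y" unfolding A_def by blast
      then obtain M' b' where Y': "Y = pt M' b'" "Pm M' b'" unfolding PP_def by blast
      have "from_nat_into PP b = Y" using Y ft by simp
      hence "\<bar>real M - real M'\<bar> \<le> d a b"
        using PP_coord0[OF FP[of a] Y(1)] X Y' unfolding d_def by (simp add: pt_def)
      hence "real M' \<le> real M + R" using b by auto
      hence "M' \<le> K" unfolding K_def by linarith
      hence "Y \<in> Pfin K" using Y' unfolding Pfin_def by auto
      thus "b \<in> to_nat_on PP ` Pfin K" using Y by auto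
    qed
    thus "finite {b\<in>A. d a b \<le> R}" using finite_Pfin finite_subset by blast
  qed
  have fin: "\<forall>F. F \<subseteq> A \<and> finite F \<longrightarrow> bilip_embeds F d 1 TYPE('a)"
  proof (intro allI impI)
    fix F assume F: "F \<subseteq> A \<and> finite F"
    let ?S = "from_nat_into PP ` F"
    have "?S \<subseteq> l2" "finite ?S" using FP PP_l2 F by auto
    then obtain f :: "(nat \<Rightarrow> real) \<Rightarrow> 'a" where f: "\<forall>x\<in>?S. \<forall>y\<in>?S. norm (f x - f y) = l2dist x y"
      using assms(2) unfolding finitely_l2_isometric_def by blast
    show "bilip_embeds F d 1 TYPE('a)" unfolding bilip_embeds_def
      by (intro exI[of _ "\<lambda>i. f (from_nat_into PP i)"] exI[of _ 1]) (simp add: f d_def)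
  qed
  have nemb: "\<not> bilip_embeds A d 1 TYPE('a)"
  proof
    assume "bilip_embeds A d 1 TYPE('a)"
    then obtain f :: "nat \<Rightarrow> 'a" and r where r: "0 < r"
      and fr: "\<forall>a\<in>A. \<forall>b\<in>A. r * d a b \<le> norm (f a - f b) \<and> norm (f a - f b) \<le> 1 * r * d a b"
      unfolding bilip_embeds_def by blast
    define g where "g x = (1/r) *\<^sub>R f (to_nat_on PP x)" for x
    have "isoP g"
    proof
      show "strictly_convex TYPE('a)" by (rule assms(1))
      show "\<forall>x\<in>PP. \<forall>y\<in>PP. norm (g x - g y) = l2dist x y"
      proof (intro ballI)
        fix x y assume xy: "x \<in> PP" "y \<in> PP"
        have inA: "to_nat_on PP x \<in> A" "to_nat_on PP y \<in> A" using xy unfolding A_def by auto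
        have dd: "d (to_nat_on PP x) (to_nat_on PP y) = l2dist x y" unfolding d_def using xy ft by simp
        have "norm (f (to_nat_on PP x) - f (to_nat_on PP y)) = r * l2dist x y"
          using fr inA dd by (metis antisym mult_1)
        moreover have "g x - g y = (1/r) *\<^sub>R (f (to_nat_on PP x) - f (to_nat_on PP y))"
          unfolding g_def by (simp add: scaleR_diff_right)
        ultimately show "norm (g x - g y) = l2dist x y" using r by simp
      qed
    qed
    thus False using isoP.l2emb assms(3) by blast
  qed
  show ?thesis
    by (intro exI[of _ A] exI[of _ d] exI[of _ 1]) (use metric lf fin nemb in \<open>auto simp: locally_finite_metric_def\<close>)
qed


end
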